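(* Let $G>0$, $\bar\rho>0$, and let $W$ and $g$ be as in the context. Let $T>0$, $\mu\in\mathbb{R}$, and let $q:[0,T)\to[0,\infty)$ and $\varphi:[0,1]\to[0,\infty)$ be twice differentiable, with $\varphi(0)=\varphi''(0)=0$ and $\varphi'>0$ on $[0,1]$. Define \[ \lambda(R)=\begin{cases}\varphi(R)/R, & R\in(0,1],\\ \varphi'(0), & R=0,\end{cases}\qquad y(R)=\frac{\varphi'(R)}{\lambda(R)},\quad R\in[0,1]. \] Assume that \[ \begin{cases} \displaystyle \frac{\varphi^2}{R^5}\,\partial_R\Big(\frac{R^4}{\varphi}\,g'(y)\Big) + \frac{\varphi}{R^2}\,g(y) = \Big(\frac{4\pi}{3}G\bar\rho + \mu\,\lambda^3\Big)\bar\rho^{-\frac13}\,\varphi,\\[2mm] g'(y(1))=0,\qquad \varphi(1)=1, \end{cases} \] and that $q^2\ddot q=\mu$ on $[0,T)$ with $q(0)=1$. Then $\phi(t,R)=q(t)\varphi(R)$ satisfies \[ \begin{cases} \displaystyle \phi_{tt} - \bar\rho^{\frac13}\Big[\frac{1}{R^2\phi}\,\partial_R\Big(\frac{R^4}{\phi}\,g'(Y)\Big) + \frac{R}{\phi^2}\,g(Y)\Big] + \frac{4\pi}{3}R^3 G\bar\rho\,\phi^{-2}=0,\\[2mm] g'(Y(t,1))=0, \end{cases} \] where $\Lambda(t,R)=\phi(t,R)/R$ for $R\in(0,1]$, $\Lambda(t,0)=\phi_R(t,0)$, and $Y(t,R)=\phi_R(t,R)/\Lambda(t,R)$.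
   Context: The strain-energy function $W:GL_+(3,\mathbb{R})\to\mathbb{R}$ is continuously differentiable, objective ($W(OF)=W(F)$) and isotropic ($W(FO)=W(F)$) for all $O\in SO(3,\mathbb{R})$, homogeneous of degree $-1$ ($W(\sigma F)=\sigma^{-1}W(F)$ for $\sigma>0$), and normalized by $W(I)=\bar\rho^{1/3}$. For $y>0$ and unit vector $\omega\in\mathbb{S}^2$, $g(y)=\bar\rho^{-1/3}W(I+(y-1)\,\omega\otimes\omega)$, which is independent of $\omega$. The second displayed system is the Lagrangian equation for spherically symmetric flow maps $x(t,X)=\phi(t,|X|)X/|X|$ of a self-gravitating hyperelastic body occupying the unit ball in reference configuration with traction-free boundary. *)

theory Defs
  imports "HOL-Analysis.Analysis"
begin

definition GLplus3 :: "(real^3^3) set" where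
  "GLplus3 = {F. det F > 0}"

definition SO3 :: "(real^3^3) set" where
  "SO3 = {Q. orthogonal_matrix Q \<and> det Q = 1}"

definition outer :: "real^3 \<Rightarrow> real^3 \<Rightarrow> real^3^3" where
  "outer a b = (\<chi> i j. a $ i * b $ j)"

definition C1_on_GLplus :: "(real^3^3 \<Rightarrow> real) \<Rightarrow> bool" where
  "C1_on_GLplus W \<longleftrightarrow> (\<exists>W'. (\<forall>F\<in>GLplus3. (W has_derivative blinfun_apply (W' F)) (at F))
        \<and> continuous_on GLplus3 W')"

definition Lam_of :: "(real \<Rightarrow> real) \<Rightarrow> real \<Rightarrow> real" where
  "Lam_of f R = (if R = 0 then vector_derivative f (at 0 within {0..1}) else f R / R)"

definition Y_of :: "(real \<Rightarrow> real) \<Rightarrow> real \<Rightarrow> real" where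
  "Y_of f R = vector_derivative f (at R within {0..1}) / Lam_of f R"

end

theory Submission
  imports Defs
begin

lemma alg:
  fixes a Q R D0 gy c mu p q2 :: real
  assumes a: "a > 0" and Q: "Q > 0" and R: "R > 0"
    and e: "p * (a^2/R^5*D0 + a/R^2*gy) = (c + mu*(a/R)^3)*a"
    and m: "Q^2*q2 = mu"
  shows "q2*a - p*(1/(R^2*(Q*a)) * ((1/Q)*D0) + R/(Q*a)^2*gy) + c*R^3 * (1/(Q*a)^2) = 0"
proof -
  have s1: "p*(D0/(R^2*a) + R*gy/a^2) = (p * (a^2/R^5*D0 + a/R^2*gy)) * (R^3/a^3)"
    using a R by (simp add: field_simps eval_nat_numeral)
  have s2: "(c + mu*(a/R)^3)*a*(R^3/a^3) = c*R^3/a^2 + mu*a"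
    using a R by (simp add: field_simps eval_nat_numeral)
  have key: "p*(D0/(R^2*a) + R*gy/a^2) = c*R^3/a^2 + mu*a" using s1 s2 e by simp
  have s3: "p*(1/(R^2*(Q*a)) * ((1/Q)*D0) + R/(Q*a)^2*gy) = p*(D0/(R^2*a) + R*gy/a^2) / Q^2"
    using a R Q by (simp add: field_simps eval_nat_numeral)
  have "q2*a - p*(1/(R^2*(Q*a)) * ((1/Q)*D0) + R/(Q*a)^2*gy) + c*R^3 * (1/(Q*a)^2)
        = q2*a - (c*R^3/a^2 + mu*a)/Q^2 + c*R^3/(Q^2*a^2)" unfolding s3 key
    by (simp add: power_mult_distrib)
  also have "\<dots> = (Q^2*q2 - mu)*a/Q^2" using a Q by (simp add: field_simps)
  finally show ?thesis using m by simp
qed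

lemma pw_lem: fixes x :: real assumes "x > 0" shows "x powr (-2) = 1 / x^2"
  using assms by (simp add: powr_minus powr_numeral divide_inverse)

lemma der_interior:
  fixes f :: "real \<Rightarrow> real"
  assumes "(f has_real_derivative D) (at x within {0..<T})" "0 < x" "x < T"
  shows "(f has_real_derivative D) (at x)"
proof -
  have "at x within {0..<T} = at x"
    by (rule at_within_interior) (use assms in auto)
  then show ?thesis using assms(1) by simp
qed

lemma cont_sub:
  fixes f :: "real \<Rightarrow> real"
  assumes "\<And>t. t \<in> {0..<T} \<Longrightarrow> (f has_real_derivative f' t) (at t within {0..<T})"
    and "b < T"
  shows "continuous_on {0..b} f"
proof -
  have "continuous_on {0..<T} f"
    using assms(1) by (meson DERIV_continuous continuous_on_eq_continuous_within)
  then show ?thesis by (rule continuous_on_subset) (use assms(2) in auto)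
qed

lemma q_pos:
  fixes q q' q'' :: "real \<Rightarrow> real" and T mu :: real
  assumes q_nonneg: "\<And>t. t \<in> {0..<T} \<Longrightarrow> q t \<ge> 0"
    and q_d1: "\<And>t. t \<in> {0..<T} \<Longrightarrow> (q has_real_derivative q' t) (at t within {0..<T})"
    and q_d2: "\<And>t. t \<in> {0..<T} \<Longrightarrow> (q' has_real_derivative q'' t) (at t within {0..<T})"
    and q_ode: "\<And>t. t \<in> {0..<T} \<Longrightarrow> (q t)^2 * q'' t = mu"
    and q_0: "q 0 = 1"
    and t0: "t0 \<in> {0..<T}"
  shows "q t0 > 0"
proof (rule ccontr)
  assume "\<not> q t0 > 0"
  with q_nonneg[OF t0] have z0: "q t0 = 0" by simp
  then have mu0: "mu = 0" using q_ode[OF t0] by simp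
  define Z where "Z = {0..t0} \<inter> q -` {0}"
  have cq: "continuous_on {0..t0} q" using cont_sub[OF q_d1] t0 by auto
  have "closed Z" unfolding Z_def by (rule continuous_closed_preimage[OF cq]) auto
  moreover have "Z \<noteq> {}" using z0 t0 unfolding Z_def by auto
  moreover have bZ: "bdd_below Z" unfolding Z_def by (auto intro: bdd_belowI[of _ 0])
  ultimately have t1Z: "Inf Z \<in> Z" by (meson closed_contains_Inf)
  define t1 where "t1 = Inf Z"
  have t1: "q t1 = 0" "0 \<le> t1" "t1 \<le> t0" using t1Z unfolding t1_def Z_def by auto
  have t1pos: "t1 > 0" using t1 q_0 by (metis order_le_less zero_neq_one)
  have below: "q x > 0" if "0 \<le> x" "x < t1" for x
  proof -
    have "x \<notin> Z" using that cInf_lower[OF _ bZ] unfolding t1_def by force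
    then have "q x \<noteq> 0" using that t1 unfolding Z_def by auto
    moreover have "q x \<ge> 0" using q_nonneg that t1 t0 by auto
    ultimately show ?thesis by simp
  qed
  have T1: "t1 < T" using t1 t0 by auto
  have cq': "continuous_on {0..t1} q'" using cont_sub[OF q_d2] T1 by auto
  have d2: "DERIV q' x :> 0" if "0 < x" "x < t1" for x
  proof -
    have "q x > 0" using below that by auto
    then have "q'' x = 0" using q_ode[of x] mu0 that T1 by auto
    then show ?thesis using der_interior[OF q_d2[of x]] that T1 by auto
  qed
  define a where "a = q' 0"
  have q'c: "q' x = a" if "0 \<le> x" "x \<le> t1" for x
    using DERIV_isconst2[OF t1pos cq' d2 that] unfolding a_def by auto
  have ch: "continuous_on {0..t1} (\<lambda>x. q x - a * x)"
    using cont_sub[OF q_d1] T1 by (intro continuous_intros) auto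
  have dh: "DERIV (\<lambda>x. q x - a * x) x :> 0" if "0 < x" "x < t1" for x
  proof -
    have "DERIV q x :> a" using der_interior[OF q_d1[of x]] q'c[of x] that T1 by auto
    then show ?thesis by (auto intro!: derivative_eq_intros)
  qed
  have "q t1 - a * t1 = q 0 - a * 0" using DERIV_isconst_end[OF t1pos ch dh] by simp
  then have "a * t1 = -1" using t1 q_0 by simp
  then have aneg: "a < 0" using t1pos by (smt (verit) mult_nonneg_nonneg)
  have "(q has_real_derivative a) (at t1 within {0..<T})" using q_d1[of t1] q'c[of t1] t1 T1 by auto
  from has_real_derivative_neg_dec_right[OF this aneg]
  obtain d where d: "d > 0" "\<And>h. h > 0 \<Longrightarrow> t1 + h \<in> {0..<T} \<Longrightarrow> h < d \<Longrightarrow> q t1 > q (t1 + h)" by blast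
  define h where "h = min (d/2) ((T - t1)/2)"
  have "h > 0" "h < d" "t1 + h \<in> {0..<T}" using d(1) T1 t1(2) unfolding h_def by (auto simp: min_def field_simps)
  then have "q (t1 + h) < 0" using d(2) t1 by auto
  moreover have "q (t1 + h) \<ge> 0" using q_nonneg \<open>t1 + h \<in> {0..<T}\<close> by auto
  ultimately show False by simp
qed

theorem corollary1:
  fixes G rhob T mu :: real
    and W :: "real^3^3 \<Rightarrow> real"
    and g :: "real \<Rightarrow> real"
    and q q' q'' :: "real \<Rightarrow> real"
    and \<phi> \<phi>' \<phi>'' :: "real \<Rightarrow> real"
  assumes G_pos: "G > 0" and rhob_pos: "rhob > 0"
    and W_C1: "C1_on_GLplus W"
    and W_obj: "\<And>Q F. Q \<in> SO3 \<Longrightarrow> F \<in> GLplus3 \<Longrightarrow> W (Q ** F) = W F"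
    and W_iso: "\<And>Q F. Q \<in> SO3 \<Longrightarrow> F \<in> GLplus3 \<Longrightarrow> W (F ** Q) = W F"
    and W_hom: "\<And>\<sigma> F. \<sigma> > 0 \<Longrightarrow> F \<in> GLplus3 \<Longrightarrow> W (\<sigma> *\<^sub>R F) = W F / \<sigma>"
    and W_norm: "W (mat 1) = rhob powr (1/3)"
    and g_def: "\<And>y \<omega>. y > 0 \<Longrightarrow> norm \<omega> = 1 \<Longrightarrow>
                   g y = rhob powr (-1/3) * W (mat 1 + (y - 1) *\<^sub>R outer \<omega> \<omega>)"
    and T_pos: "T > 0"
    and q_nonneg: "\<And>t. t \<in> {0..<T} \<Longrightarrow> q t \<ge> 0"
    and q_d1: "\<And>t. t \<in> {0..<T} \<Longrightarrow> (q has_real_derivative q' t) (at t within {0..<T})"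
    and q_d2: "\<And>t. t \<in> {0..<T} \<Longrightarrow> (q' has_real_derivative q'' t) (at t within {0..<T})"
    and \<phi>_nonneg: "\<And>R. R \<in> {0..1} \<Longrightarrow> \<phi> R \<ge> 0"
    and \<phi>_d1: "\<And>R. R \<in> {0..1} \<Longrightarrow> (\<phi> has_real_derivative \<phi>' R) (at R within {0..1})"
    and \<phi>_d2: "\<And>R. R \<in> {0..1} \<Longrightarrow> (\<phi>' has_real_derivative \<phi>'' R) (at R within {0..1})"
    and \<phi>_0: "\<phi> 0 = 0" and \<phi>''_0: "\<phi>'' 0 = 0"
    and \<phi>'_pos: "\<And>R. R \<in> {0..1} \<Longrightarrow> \<phi>' R > 0"
    and ode: "\<And>R. R \<in> {0<..1} \<Longrightarrow>
       (\<exists>D. ((\<lambda>r. r^4 / \<phi> r * deriv g (\<phi>' r / (if r = 0 then \<phi>' 0 else \<phi> r / r)))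
                has_real_derivative D) (at R within {0..1})
           \<and> (\<phi> R)^2 / R^5 * D
               + \<phi> R / R^2 * g (\<phi>' R / (if R = 0 then \<phi>' 0 else \<phi> R / R))
             = (4 * pi / 3 * G * rhob + mu * (if R = 0 then \<phi>' 0 else \<phi> R / R)^3)
               * rhob powr (-1/3) * \<phi> R)"
    and bc: "deriv g (\<phi>' 1 / (\<phi> 1 / 1)) = 0"
    and \<phi>_1: "\<phi> 1 = 1"
    and q_ode: "\<And>t. t \<in> {0..<T} \<Longrightarrow> (q t)^2 * q'' t = mu"
    and q_0: "q 0 = 1"
  defines "\<Phi> \<equiv> \<lambda>t R. q t * \<phi> R"
  shows "\<forall>t\<in>{0..<T}.
           (\<forall>R\<in>{0<..1}.
              \<exists>\<Phi>t \<Phi>tt D.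
                (\<forall>s\<in>{0..<T}. ((\<lambda>s. \<Phi> s R) has_real_derivative \<Phi>t s) (at s within {0..<T}))
              \<and> (\<Phi>t has_real_derivative \<Phi>tt) (at t within {0..<T})
              \<and> ((\<lambda>r. r^4 / \<Phi> t r * deriv g (Y_of (\<Phi> t) r)) has_real_derivative D) (at R within {0..1})
              \<and> \<Phi>tt - rhob powr (1/3) * (1 / (R^2 * \<Phi> t R) * D + R / (\<Phi> t R)^2 * g (Y_of (\<Phi> t) R))
                  + 4 * pi / 3 * R^3 * G * rhob * (\<Phi> t R) powr (-2) = 0)
         \<and> deriv g (Y_of (\<Phi> t) 1) = 0"
proof (intro ballI)
  fix t assume t: "t \<in> {0..<T}"
  have qt: "q t > 0" by (rule q_pos[OF q_nonneg q_d1 q_d2 q_ode q_0 t])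
  have phipos: "\<phi> R > 0" if R: "R \<in> {0<..1}" for R
  proof -
    have "\<phi> 0 < \<phi> R"
    proof (rule DERIV_pos_imp_increasing_open[of 0 R])
      show "0 < R" using R by auto
      show "\<exists>y. DERIV \<phi> x :> y \<and> y > 0" if "0 < x" "x < R" for x
      proof -
        have "at x within {0..1} = at x" by (rule at_within_interior) (use that R in auto)
        then show ?thesis using \<phi>_d1[of x] \<phi>'_pos[of x] that R by (intro exI[of _ "\<phi>' x"]) auto
      qed
      have "continuous_on {0..1} \<phi>"
        using \<phi>_d1 by (meson DERIV_continuous continuous_on_eq_continuous_within)
      then show "continuous_on {0..R} \<phi>" by (rule continuous_on_subset) (use R in auto)
    qed
    then show ?thesis using \<phi>_0 by simp
  qed
  have vd: "vector_derivative (\<Phi> t) (at r within {0..1}) = q t * \<phi>' r" if r: "r \<in> {0..1}" for r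
  proof -
    have "((\<lambda>R. q t * \<phi> R) has_real_derivative q t * \<phi>' r) (at r within {0..1})"
      using \<phi>_d1[OF r] by (auto intro!: derivative_eq_intros)
    then have "((\<lambda>R. q t * \<phi> R) has_vector_derivative q t * \<phi>' r) (at r within cbox 0 1)"
      by (simp add: has_real_derivative_iff_has_vector_derivative box_real)
    from vector_derivative_within_cbox[OF _ _ this] r
    show ?thesis unfolding \<Phi>_def by (simp add: box_real)
  qed
  have Yeq: "Y_of (\<Phi> t) r = \<phi>' r / (if r = 0 then \<phi>' 0 else \<phi> r / r)" if r: "r \<in> {0..1}" for r
  proof (cases "r = 0")
    case True
    then show ?thesis using vd[OF r] qt \<phi>'_pos[of 0] unfolding Y_of_def Lam_of_def by simp
  next
    case False
    then show ?thesis using vd[OF r] qt unfolding Y_of_def Lam_of_def \<Phi>_def by (simp add: field_simps)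
  qed
  have B: "deriv g (Y_of (\<Phi> t) 1) = 0" using Yeq[of 1] bc by simp
  have "\<forall>R\<in>{0<..1}. \<exists>\<Phi>t \<Phi>tt D.
                (\<forall>s\<in>{0..<T}. ((\<lambda>s. \<Phi> s R) has_real_derivative \<Phi>t s) (at s within {0..<T}))
              \<and> (\<Phi>t has_real_derivative \<Phi>tt) (at t within {0..<T})
              \<and> ((\<lambda>r. r^4 / \<Phi> t r * deriv g (Y_of (\<Phi> t) r)) has_real_derivative D) (at R within {0..1})
              \<and> \<Phi>tt - rhob powr (1/3) * (1 / (R^2 * \<Phi> t R) * D + R / (\<Phi> t R)^2 * g (Y_of (\<Phi> t) R))
                  + 4 * pi / 3 * R^3 * G * rhob * (\<Phi> t R) powr (-2) = 0"
  proof (intro ballI)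
  fix R :: real assume R: "R \<in> {0<..1}"
  have pR: "\<phi> R > 0" using phipos[OF R] .
  obtain D0 where D0: "((\<lambda>r. r^4 / \<phi> r * deriv g (\<phi>' r / (if r = 0 then \<phi>' 0 else \<phi> r / r)))
                has_real_derivative D0) (at R within {0..1})"
     and eq0: "(\<phi> R)^2 / R^5 * D0 + \<phi> R / R^2 * g (\<phi>' R / (if R = 0 then \<phi>' 0 else \<phi> R / R))
             = (4 * pi / 3 * G * rhob + mu * (if R = 0 then \<phi>' 0 else \<phi> R / R)^3) * rhob powr (-1/3) * \<phi> R"
    using ode[OF R] by blast
  define y where "y = \<phi>' R / (\<phi> R / R)"
  have R0: "R \<noteq> 0" "R > 0" using R by auto
  have eq1: "(\<phi> R)^2 / R^5 * D0 + \<phi> R / R^2 * g y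
             = (4 * pi / 3 * G * rhob + mu * (\<phi> R / R)^3) * rhob powr (-1/3) * \<phi> R"
    using eq0 R0 unfolding y_def by simp
  have YR: "Y_of (\<Phi> t) R = y" using Yeq[of R] R unfolding y_def by auto
  show "\<exists>\<Phi>t \<Phi>tt D.
                (\<forall>s\<in>{0..<T}. ((\<lambda>s. \<Phi> s R) has_real_derivative \<Phi>t s) (at s within {0..<T}))
              \<and> (\<Phi>t has_real_derivative \<Phi>tt) (at t within {0..<T})
              \<and> ((\<lambda>r. r^4 / \<Phi> t r * deriv g (Y_of (\<Phi> t) r)) has_real_derivative D) (at R within {0..1})
              \<and> \<Phi>tt - rhob powr (1/3) * (1 / (R^2 * \<Phi> t R) * D + R / (\<Phi> t R)^2 * g (Y_of (\<Phi> t) R))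
                  + 4 * pi / 3 * R^3 * G * rhob * (\<Phi> t R) powr (-2) = 0"
  proof (intro exI conjI)
    show "\<forall>s\<in>{0..<T}. ((\<lambda>s. \<Phi> s R) has_real_derivative q' s * \<phi> R) (at s within {0..<T})"
      unfolding \<Phi>_def using q_d1 by (auto intro!: derivative_eq_intros)
    show "((\<lambda>s. q' s * \<phi> R) has_real_derivative q'' t * \<phi> R) (at t within {0..<T})"
      using q_d2[OF t] by (auto intro!: derivative_eq_intros)
    have "((\<lambda>r. (1 / q t) * (r^4 / \<phi> r * deriv g (\<phi>' r / (if r = 0 then \<phi>' 0 else \<phi> r / r))))
                has_real_derivative (1 / q t) * D0) (at R within {0..1})"
      by (rule DERIV_cmult[OF D0])
    then show "((\<lambda>r. r^4 / \<Phi> t r * deriv g (Y_of (\<Phi> t) r)) has_real_derivative (1 / q t) * D0) (at R within {0..1})"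
      unfolding has_field_derivative_def
    proof (rule has_derivative_transform[rotated 2])
      show "R \<in> {0..1}" using R by auto
      fix r :: real assume r: "r \<in> {0..1}"
      show "r^4 / \<Phi> t r * deriv g (Y_of (\<Phi> t) r) =
         (1 / q t) * (r^4 / \<phi> r * deriv g (\<phi>' r / (if r = 0 then \<phi>' 0 else \<phi> r / r)))"
        unfolding Yeq[OF r] unfolding \<Phi>_def using qt by (simp add: field_simps)
    qed
    have rp: "rhob powr (1/3) * rhob powr (-1/3) = 1"
      using rhob_pos by (simp add: powr_add[symmetric])
    have pw: "(q t * \<phi> R) powr (-2) = 1 / (q t * \<phi> R)^2"
      using qt pR by (intro pw_lem) simp
    define c where "c = 4 * pi / 3 * G * rhob"
    define p where "p = rhob powr (1/3)"
    have "p * ((\<phi> R)^2 / R^5 * D0 + \<phi> R / R^2 * g y)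
          = (c + mu * (\<phi> R / R)^3) * \<phi> R * (rhob powr (1/3) * rhob powr (-1/3))"
      unfolding eq1 c_def p_def by (simp only: mult_ac)
    then have e: "p * ((\<phi> R)^2 / R^5 * D0 + \<phi> R / R^2 * g y) = (c + mu * (\<phi> R / R)^3) * \<phi> R"
      using rp by simp
    have qq: "q t ^ 2 * q'' t = mu" using q_ode[OF t] .
    have al: "q'' t * \<phi> R - p*(1/(R^2*(q t*\<phi> R)) * ((1/q t)*D0) + R/(q t*\<phi> R)^2*g y) + c*R^3 * (1/(q t*\<phi> R)^2) = 0"
      by (rule alg[OF pR qt R0(2) e qq])
    have l3: "4 * pi / 3 * R^3 * G * rhob * (1 / (q t * \<phi> R)^2) = c*R^3 * (1/(q t*\<phi> R)^2)"
      unfolding c_def by (simp only: mult_ac)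
    show "q'' t * \<phi> R - rhob powr (1/3) * (1 / (R^2 * \<Phi> t R) * ((1 / q t) * D0) + R / (\<Phi> t R)^2 * g (Y_of (\<Phi> t) R))
                  + 4 * pi / 3 * R^3 * G * rhob * (\<Phi> t R) powr (-2) = 0"
      unfolding YR unfolding \<Phi>_def pw l3 using al unfolding p_def .
  qed
  qed
  then show "(\<forall>R\<in>{0<..1}. \<exists>\<Phi>t \<Phi>tt D.
                (\<forall>s\<in>{0..<T}. ((\<lambda>s. \<Phi> s R) has_real_derivative \<Phi>t s) (at s within {0..<T}))
              \<and> (\<Phi>t has_real_derivative \<Phi>tt) (at t within {0..<T})
              \<and> ((\<lambda>r. r^4 / \<Phi> t r * deriv g (Y_of (\<Phi> t) r)) has_real_derivative D) (at R within {0..1})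
              \<and> \<Phi>tt - rhob powr (1/3) * (1 / (R^2 * \<Phi> t R) * D + R / (\<Phi> t R)^2 * g (Y_of (\<Phi> t) R))
                  + 4 * pi / 3 * R^3 * G * rhob * (\<Phi> t R) powr (-2) = 0)
         \<and> deriv g (Y_of (\<Phi> t) 1) = 0" by (rule conjI[OF _ B])
qed

end
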